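(* Let $N,n,q\ge1$, let $A\in\mathbb{R}^{n\times n}$, $B_v\in\mathbb{R}^{n\times q}$, $G\in\mathbb{R}^{q\times n}$, $B_u\in\mathbb{R}^{n\times 1}$, $C\in\mathbb{R}^{1\times n}$ and $M\in\mathbb{R}^{N\times N}$, and suppose $K:=(I_N\otimes A)+M\otimes(B_vG)$ is invertible. Define the linear map $L:\mathbb{R}^N\to\mathbb{R}^N$ by $$L\tilde u=-(I_N\otimes C)\,K^{-1}\,(I_N\otimes B_u)\,\tilde u$$ (the steady-state input-to-readout map of the linear system $\dot{\tilde x}=K\tilde x+(I_N\otimes B_u)\tilde u$, $\tilde y=(I_N\otimes C)\tilde x$). If $\Pi\in\mathbb{R}^{N\times N}$ is invertible and $\Pi M=M\Pi$, then $L\Pi=\Pi L$, i.e. for every $\tilde u\in\mathbb{R}^N$, $L(\Pi\tilde u)=\Pi(L\tilde u)$.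
   Context: $\otimes$ denotes the Kronecker product and $I_m$ the $m\times m$ identity matrix. In the paper's setting, this describes a network of $N$ identical cells linearized about a homogeneous steady state, with $M$ the interconnection matrix. *)

theory Defs
  imports "Jordan_Normal_Form.Gauss_Jordan_Elimination"
begin

definition kron_mat :: "'a :: times mat \<Rightarrow> 'a mat \<Rightarrow> 'a mat" where
  "kron_mat P Q = mat (dim_row P * dim_row Q) (dim_col P * dim_col Q)
     (\<lambda>(i, j). P $$ (i div dim_row Q, j div dim_col Q) * Q $$ (i mod dim_row Q, j mod dim_col Q))"

definition inv_mat :: "'a :: field mat \<Rightarrow> 'a mat" where
  "inv_mat K = the (mat_inverse K)"

definition net_K :: "nat \<Rightarrow> real mat \<Rightarrow> real mat \<Rightarrow> real mat \<Rightarrow> real mat \<Rightarrow> real mat" where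
  "net_K N A Bv G M = kron_mat (1\<^sub>m N) A + kron_mat M (Bv * G)"

definition steady_map :: "nat \<Rightarrow> real mat \<Rightarrow> real mat \<Rightarrow> real mat \<Rightarrow> real mat \<Rightarrow> real mat
    \<Rightarrow> real mat \<Rightarrow> real vec \<Rightarrow> real vec" where
  "steady_map N A Bv G Bu C M u =
     - ((kron_mat (1\<^sub>m N) C * inv_mat (net_K N A Bv G M) * kron_mat (1\<^sub>m N) Bu) *\<^sub>v u)"

end

theory Submission
  imports Defs
begin

lemma sum_split_prod: "(\<Sum>k<b*d. f k) = (\<Sum>x<b. \<Sum>y<d. f (x*d+y::nat))"
proof (induction b)
  case 0 then show ?case by simp
next
  case (Suc b)
  have "{..<Suc b * d} = {..<b*d} \<union> {b*d..<b*d+d}" by auto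
  then have "(\<Sum>k<Suc b*d. f k) = (\<Sum>k<b*d. f k) + (\<Sum>k\<in>{b*d..<b*d+d}. f k)"
    by (simp add: sum.union_disjoint ivl_disj_int)
  also have "(\<Sum>k\<in>{b*d..<b*d+d}. f k) = (\<Sum>y<d. f (b*d+y))"
  proof -
    have "(\<Sum>k\<in>{0+b*d..<d+b*d}. f k) = (\<Sum>y=0..<d. f (y+b*d))" by (rule sum.shift_bounds_nat_ivl)
    then show ?thesis by (simp add: lessThan_atLeast0 add.commute)
  qed
  finally show ?case using Suc by simp
qed

lemma kron_carrier: "P \<in> carrier_mat a b \<Longrightarrow> Q \<in> carrier_mat c d \<Longrightarrow> kron_mat P Q \<in> carrier_mat (a*c) (b*d)"
  unfolding kron_mat_def by auto

lemma kron_index: "P \<in> carrier_mat a b \<Longrightarrow> Q \<in> carrier_mat c d \<Longrightarrow> i < a*c \<Longrightarrow> j < b*d \<Longrightarrow>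
  kron_mat P Q $$ (i,j) = P $$ (i div c, j div d) * Q $$ (i mod c, j mod d)"
  unfolding kron_mat_def by auto

lemma kron_mult:
  fixes P :: "'a::comm_ring_1 mat"
  assumes P: "P \<in> carrier_mat a b" and Q: "Q \<in> carrier_mat c d" and R: "R \<in> carrier_mat b e"
    and S: "S \<in> carrier_mat d f" and d: "0 < d"
  shows "kron_mat P Q * kron_mat R S = kron_mat (P*R) (Q*S)"
proof (rule eq_matI)
  have PR: "P*R \<in> carrier_mat a e" and QS: "Q*S \<in> carrier_mat c f" using P Q R S by auto
  show "dim_row (kron_mat P Q * kron_mat R S) = dim_row (kron_mat (P * R) (Q * S))"
    "dim_col (kron_mat P Q * kron_mat R S) = dim_col (kron_mat (P * R) (Q * S))"
    using kron_carrier[OF P Q] kron_carrier[OF R S] kron_carrier[OF PR QS] by auto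
  fix i j assume "i < dim_row (kron_mat (P * R) (Q * S))" "j < dim_col (kron_mat (P * R) (Q * S))"
  then have i: "i < a*c" and j: "j < e*f" using kron_carrier[OF PR QS] by auto
  have c: "0 < c" using i by (cases c) auto
  have ff: "0 < f" using j by (cases f) auto
  have id: "i div c < a" "i mod c < c" using i c by (auto simp: less_mult_imp_div_less)
  have jd: "j div f < e" "j mod f < f" using j ff by (auto simp: less_mult_imp_div_less)
  have "(kron_mat P Q * kron_mat R S) $$ (i,j) = (\<Sum>k<b*d. kron_mat P Q $$ (i,k) * kron_mat R S $$ (k,j))"
    using kron_carrier[OF P Q] kron_carrier[OF R S] i j
    by (auto simp: scalar_prod_def lessThan_atLeast0 intro!: sum.cong)
  also have "\<dots> = (\<Sum>x<b. \<Sum>y<d. kron_mat P Q $$ (i,x*d+y) * kron_mat R S $$ (x*d+y,j))"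
    by (rule sum_split_prod)
  also have "\<dots> = (\<Sum>x<b. \<Sum>y<d. (P $$ (i div c, x) * R $$ (x, j div f)) * (Q $$ (i mod c, y) * S $$ (y, j mod f)))"
  proof (intro sum.cong refl)
    fix x y assume x: "x \<in> {..<b}" and y: "y \<in> {..<d}"
    have k1: "x*d+y < Suc x * d" using y by simp
    have k2: "Suc x * d \<le> b*d" using x by (intro mult_le_mono1) simp
    have k: "x*d+y < b*d" using k1 k2 by linarith
    have dv: "(x*d+y) div d = x" "(x*d+y) mod d = y" using y d by auto
    show "kron_mat P Q $$ (i,x*d+y) * kron_mat R S $$ (x*d+y,j) =
      (P $$ (i div c, x) * R $$ (x, j div f)) * (Q $$ (i mod c, y) * S $$ (y, j mod f))"
      using kron_index[OF P Q i k] kron_index[OF R S k j] dv by (simp add: ac_simps)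
  qed
  also have "\<dots> = (\<Sum>x<b. P $$ (i div c, x) * R $$ (x, j div f)) * (\<Sum>y<d. Q $$ (i mod c, y) * S $$ (y, j mod f))"
    by (simp add: sum_product)
  also have "\<dots> = (P*R) $$ (i div c, j div f) * (Q*S) $$ (i mod c, j mod f)"
    using P Q R S id jd by (simp add: scalar_prod_def lessThan_atLeast0)
  also have "\<dots> = kron_mat (P * R) (Q * S) $$ (i, j)"
    using kron_index[OF PR QS i j] by simp
  finally show "(kron_mat P Q * kron_mat R S) $$ (i, j) = kron_mat (P * R) (Q * S) $$ (i, j)" .
qed

lemma kron_one1: "(P::'a::semiring_1 mat) \<in> carrier_mat a b \<Longrightarrow> kron_mat P (1\<^sub>m 1) = P"
  by (rule eq_matI) (auto simp: kron_mat_def)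


lemma mat_vec_uminus: "(P::real mat) \<in> carrier_mat a b \<Longrightarrow> w \<in> carrier_vec b \<Longrightarrow> P *\<^sub>v (- w) = - (P *\<^sub>v w)"
  by (intro eq_vecI) (auto simp: scalar_prod_def sum_negf)

theorem mainTheorem2:
  fixes N n q :: nat
    and A Bv G Bu C M Pi :: "real mat"
  assumes "N \<ge> 1" and "n \<ge> 1" and "q \<ge> 1"
    and "A \<in> carrier_mat n n" and "Bv \<in> carrier_mat n q" and "G \<in> carrier_mat q n"
    and "Bu \<in> carrier_mat n 1" and "C \<in> carrier_mat 1 n" and "M \<in> carrier_mat N N"
    and "invertible_mat (net_K N A Bv G M)"
    and "Pi \<in> carrier_mat N N" and "invertible_mat Pi" and "Pi * M = M * Pi"
  shows "\<forall>u \<in> carrier_vec N.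
           steady_map N A Bv G Bu C M (Pi *\<^sub>v u) = Pi *\<^sub>v steady_map N A Bv G Bu C M u"
proof
  note A = assms(4) and Bv = assms(5) and G = assms(6) and Bu = assms(7) and C = assms(8)
    and M = assms(9) and Pi = assms(11)
  have n0: "0 < n" using assms(2) by simp
  define K where "K = net_K N A Bv G M"
  have BG: "Bv * G \<in> carrier_mat n n" using Bv G by simp
  have I: "1\<^sub>m N \<in> carrier_mat N N" "1\<^sub>m n \<in> carrier_mat n n" "1\<^sub>m 1 \<in> carrier_mat 1 1" by auto
  have K1: "kron_mat (1\<^sub>m N) A \<in> carrier_mat (N*n) (N*n)" using kron_carrier[OF I(1) A] .
  have K2: "kron_mat M (Bv*G) \<in> carrier_mat (N*n) (N*n)" using kron_carrier[OF M BG] .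
  have K: "K \<in> carrier_mat (N*n) (N*n)" unfolding K_def net_K_def using K1 K2 by simp
  define P' where "P' = kron_mat Pi (1\<^sub>m n)"
  have P': "P' \<in> carrier_mat (N*n) (N*n)" unfolding P'_def using kron_carrier[OF Pi I(2)] .
  define Ki where "Ki = inv_mat K"
  obtain B where h: "inverts_mat K B" "inverts_mat B K"
    using assms(10) unfolding K_def[symmetric] invertible_mat_def by auto
  have B1: "K * B = 1\<^sub>m (N*n)" using h(1) K unfolding inverts_mat_def by simp
  have B2: "B * K = 1\<^sub>m (dim_row B)" using h(2) unfolding inverts_mat_def by simp
  have "dim_col (B * K) = N*n" using K by simp
  then have "dim_row B = N*n" unfolding B2 by simp
  then have B: "K * B = 1\<^sub>m (N*n)" "B * K = 1\<^sub>m (N*n)" using B1 B2 by auto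
  have Bc: "B \<in> carrier_mat (N*n) (N*n)" using B K
    by (metis carrier_matD(1) carrier_matI index_mult_mat(2) index_mult_mat(3) index_one_mat(2) index_one_mat(3))
  have "K \<in> Units (ring_mat TYPE(real) (N*n) ())"
    unfolding Units_def ring_mat_simps using K B Bc by auto
  then have "mat_inverse K \<noteq> None" using mat_inverse(1)[OF K, of "()"] by blast
  then obtain Ki' where "mat_inverse K = Some Ki'" by auto
  then have Ki: "K * Ki = 1\<^sub>m (N*n)" "Ki * K = 1\<^sub>m (N*n)" "Ki \<in> carrier_mat (N*n) (N*n)"
    using mat_inverse(2)[OF K] unfolding Ki_def inv_mat_def by auto
  have "P' * kron_mat (1\<^sub>m N) A = kron_mat Pi A"
    unfolding P'_def using kron_mult[OF Pi I(2) I(1) A n0] Pi A by simp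
  moreover have "kron_mat (1\<^sub>m N) A * P' = kron_mat Pi A"
    unfolding P'_def using kron_mult[OF I(1) A Pi I(2) n0] Pi A by simp
  moreover have "P' * kron_mat M (Bv*G) = kron_mat (Pi*M) (Bv*G)"
    unfolding P'_def using kron_mult[OF Pi I(2) M BG n0] BG Bv G by simp
  moreover have "kron_mat M (Bv*G) * P' = kron_mat (M*Pi) (Bv*G)"
    unfolding P'_def using kron_mult[OF M BG Pi I(2) n0] BG Bv G by simp
  ultimately have PK: "P' * K = K * P'"
    unfolding K_def net_K_def using assms(13) K1 K2 P'
    by (simp add: mult_add_distrib_mat[OF P' K1 K2] add_mult_distrib_mat[OF K1 K2 P'])
  have PKi: "Ki * P' = P' * Ki"
  proof -
    have KiP: "Ki * P' \<in> carrier_mat (N*n) (N*n)" using Ki(3) P' by simp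
    have "Ki * P' = Ki * P' * (K * Ki)" using Ki P' by simp
    also have "\<dots> = Ki * P' * K * Ki" by (simp only: assoc_mult_mat[OF KiP K Ki(3)])
    also have "\<dots> = Ki * (P' * K) * Ki" by (simp only: assoc_mult_mat[OF Ki(3) P' K])
    also have "\<dots> = Ki * (K * P') * Ki" by (simp only: PK)
    also have "\<dots> = Ki * K * P' * Ki" by (simp only: assoc_mult_mat[OF Ki(3) K P'])
    also have "\<dots> = P' * Ki" using Ki P' by simp
    finally show ?thesis .
  qed
  define KC where "KC = kron_mat (1\<^sub>m N) C"
  define KB where "KB = kron_mat (1\<^sub>m N) Bu"
  have KC: "KC \<in> carrier_mat N (N*n)" unfolding KC_def using kron_carrier[OF I(1) C] by simp
  have KB: "KB \<in> carrier_mat (N*n) N" unfolding KB_def using kron_carrier[OF I(1) Bu] by simp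
  have Pi1: "kron_mat Pi (1\<^sub>m 1) = Pi" using kron_one1[OF Pi] .
  have "KB * Pi = kron_mat Pi Bu"
    unfolding KB_def using kron_mult[OF I(1) Bu Pi I(3)] Pi1 Pi Bu by simp
  moreover have "P' * KB = kron_mat Pi Bu"
    unfolding KB_def P'_def using kron_mult[OF Pi I(2) I(1) Bu n0] Pi Bu by simp
  ultimately have PB: "KB * Pi = P' * KB" by simp
  have "KC * P' = kron_mat Pi C"
    unfolding KC_def P'_def using kron_mult[OF I(1) C Pi I(2) n0] Pi C by simp
  moreover have "Pi * KC = kron_mat Pi C"
    unfolding KC_def using kron_mult[OF Pi I(3) I(1) C] Pi1 Pi C by simp
  ultimately have PC: "KC * P' = Pi * KC" by simp
  define X where "X = KC * Ki * KB"
  have X: "X \<in> carrier_mat N N" unfolding X_def using KC Ki KB by auto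
  have XP: "X * Pi = Pi * X"
  proof -
    have KCKi: "KC * Ki \<in> carrier_mat N (N*n)" using KC Ki(3) by simp
    have "X * Pi = KC * Ki * (KB * Pi)" unfolding X_def by (simp only: assoc_mult_mat[OF KCKi KB Pi])
    also have "\<dots> = KC * Ki * (P' * KB)" by (simp only: PB)
    also have "\<dots> = KC * Ki * P' * KB" by (simp only: assoc_mult_mat[OF KCKi P' KB])
    also have "\<dots> = KC * (Ki * P') * KB" by (simp only: assoc_mult_mat[OF KC Ki(3) P'])
    also have "\<dots> = KC * (P' * Ki) * KB" by (simp only: PKi)
    also have "\<dots> = KC * P' * Ki * KB" by (simp only: assoc_mult_mat[OF KC P' Ki(3)])
    also have "\<dots> = Pi * KC * Ki * KB" by (simp only: PC)
    also have "\<dots> = Pi * (KC * Ki) * KB" by (simp only: assoc_mult_mat[OF Pi KC Ki(3)])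
    also have "\<dots> = Pi * X" unfolding X_def by (simp only: assoc_mult_mat[OF Pi KCKi KB])
    finally show ?thesis .
  qed
  fix u :: "real vec" assume u: "u \<in> carrier_vec N"
  have sm: "steady_map N A Bv G Bu C M v = - (X *\<^sub>v v)" for v
    unfolding steady_map_def X_def KC_def KB_def Ki_def K_def ..
  have "X *\<^sub>v (Pi *\<^sub>v u) = (X * Pi) *\<^sub>v u" using X Pi u by simp
  also have "\<dots> = Pi *\<^sub>v (X *\<^sub>v u)" unfolding XP using X Pi u by simp
  finally show "steady_map N A Bv G Bu C M (Pi *\<^sub>v u) = Pi *\<^sub>v steady_map N A Bv G Bu C M u"
    unfolding sm using mat_vec_uminus[OF Pi, of "X *\<^sub>v u"] X u by simp
qed

end
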